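(* Let $x,y$ be non-commuting indeterminates and $C=xyx^{-1}y^{-1}$. Let $(R_n)_{n\in\mathbb Z}$ be the solution of $$R_{n+1}CR_{n-1}=R_n^2+1\qquad(n\in\mathbb Z)$$ with $R_0=yxy^{-1}$ and $R_1=y$. Put $$y_1=y^2x^{-1}y^{-1},\qquad y_2=x^{-1}y^{-1},\qquad y_3=xy^{-1}.$$ Then for all $n\ge 0$, $R_nR_0^{-1}$ equals the sum, over all paths on $\{0,1,2,3\}$ with $2n$ steps of the form $i\to i\pm1$ that start and end at $0$, of the weight of the path. The weight of a path is the product, from left to right in the order the steps are taken, of the factor $1$ for each step $i\to i+1$ and the factor $y_i$ for each step $i\to i-1$.
   Context: Work in the free skew field (non-commutative rational functions) over $\mathbb C$ generated by $x,y$. *)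

theory Defs
  imports Main
begin

text \<open>Letters of the free group on x, y: (is_y, is_inverse).\<close>
type_synonym letter = "bool \<times> bool"

definition letter_eval :: "'a::division_ring \<Rightarrow> 'a \<Rightarrow> letter \<Rightarrow> 'a" where
  "letter_eval x y l = (let g = (if fst l then y else x) in if snd l then inverse g else g)"

definition word_eval :: "'a::division_ring \<Rightarrow> 'a \<Rightarrow> letter list \<Rightarrow> 'a" where
  "word_eval x y w = prod_list (map (letter_eval x y) w)"

definition reduced_word :: "letter list \<Rightarrow> bool" where
  "reduced_word w = (\<forall>i. Suc i < length w \<longrightarrow>
      \<not> (fst (w ! i) = fst (w ! Suc i) \<and> snd (w ! i) \<noteq> snd (w ! Suc i)))"

text \<open>x, y behave like free generators of a free skew field: the integral group ring
  of the free group on x, y embeds (distinct reduced words are linearly independent).\<close>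
definition free_pair :: "'a::division_ring \<Rightarrow> 'a \<Rightarrow> bool" where
  "free_pair x y = (\<forall>(W :: letter list set) (c :: letter list \<Rightarrow> int).
      finite W \<longrightarrow> (\<forall>w\<in>W. reduced_word w) \<longrightarrow> (\<exists>w\<in>W. c w \<noteq> 0) \<longrightarrow>
      (\<Sum>w\<in>W. of_int (c w) * word_eval x y w) \<noteq> 0)"

definition yw :: "'a::division_ring \<Rightarrow> 'a \<Rightarrow> nat \<Rightarrow> 'a" where
  "yw x y i = (if i = 1 then y * y * inverse x * inverse y
               else if i = 2 then inverse x * inverse y
               else if i = 3 then x * inverse y else 0)"

definition paths :: "nat \<Rightarrow> nat list set" where
  "paths n = {p. length p = 2 * n + 1 \<and> p ! 0 = 0 \<and> p ! (2 * n) = 0 \<and> set p \<subseteq> {0..3} \<and>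
      (\<forall>i < 2 * n. p ! (i + 1) = p ! i + 1 \<or> p ! i = p ! (i + 1) + 1)}"

definition path_weight :: "'a::division_ring \<Rightarrow> 'a \<Rightarrow> nat list \<Rightarrow> 'a" where
  "path_weight x y p = prod_list (map (\<lambda>i. if p ! (i + 1) = p ! i + 1 then 1 else yw x y (p ! i))
      [0..<length p - 1])"

end

theory Submission
  imports Defs
begin


lemma canc1: "a \<noteq> 0 \<Longrightarrow> (a::'a::division_ring) * (inverse a * z) = z"
  by (simp add: mult.assoc[symmetric])
lemma canc2: "a \<noteq> 0 \<Longrightarrow> inverse (a::'a::division_ring) * (a * z) = z"
  by (simp add: mult.assoc[symmetric])

lemmas wsimps = canc1 canc2 right_inverse left_inverse mult.assoc distrib_left distrib_right
   right_diff_distrib left_diff_distrib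

lemma sum_list_count:
  "sum_list (map f xs) = (\<Sum>v\<in>set xs. of_nat (count_list xs v) * (f v :: 'b::semiring_1))"
proof (induction xs)
  case Nil thus ?case by simp
next
  case (Cons a xs)
  show ?case
  proof (cases "a \<in> set xs")
    case True
    have "(\<Sum>v\<in>set (a#xs). of_nat (count_list (a#xs) v) * f v)
       = (\<Sum>v\<in>set xs. (if v = a then f v else 0) + of_nat (count_list xs v) * f v)"
      using True by (intro sum.cong) (auto simp: insert_absorb distrib_right)
    also have "\<dots> = f a + (\<Sum>v\<in>set xs. of_nat (count_list xs v) * f v)"
      using True by (simp add: sum.distrib sum.delta)
    finally show ?thesis using Cons by simp
  next
    case False
    have "(\<Sum>v\<in>set (a#xs). of_nat (count_list (a#xs) v) * f v)
       = of_nat (count_list (a#xs) a) * f a + (\<Sum>v\<in>set xs. of_nat (count_list (a#xs) v) * f v)"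
      using False by simp
    also have "(\<Sum>v\<in>set xs. of_nat (count_list (a#xs) v) * f v) = (\<Sum>v\<in>set xs. of_nat (count_list xs v) * f v)"
      using False by (intro sum.cong) auto
    finally show ?thesis using Cons False by (simp add: count_list_0_iff)
  qed
qed

fun cancel :: "letter \<Rightarrow> letter list \<Rightarrow> letter list" where
  "cancel l [] = [l]"
| "cancel l (m#w) = (if fst l = fst m \<and> snd l \<noteq> snd m then w else l#m#w)"

fun red :: "letter list \<Rightarrow> letter list" where
  "red [] = []"
| "red (l#w) = cancel l (red w)"

lemma reduced_Nil: "reduced_word []" by (simp add: reduced_word_def)
lemma reduced_single: "reduced_word [a]" by (simp add: reduced_word_def)
lemma reduced_Cons2: "reduced_word (a#b#w) = (\<not>(fst a = fst b \<and> snd a \<noteq> snd b) \<and> reduced_word (b#w))"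
  unfolding reduced_word_def
  apply (rule iffI)
   apply (intro conjI)
    apply (erule allE[of _ 0]; simp)
   apply (intro allI impI)
   apply (erule_tac x="Suc i" in allE; simp)
  apply (intro allI impI)
  apply (case_tac i; simp)
  done

lemma reduced_tl: "reduced_word (a#w) \<Longrightarrow> reduced_word w"
  by (cases w) (auto simp: reduced_Nil reduced_Cons2)

lemma reduced_cancel: "reduced_word w \<Longrightarrow> reduced_word (cancel l w)"
  by (cases w) (auto simp: reduced_single reduced_Cons2 dest: reduced_tl)

lemma reduced_red: "reduced_word (red w)"
  by (induction w) (auto simp: reduced_Nil reduced_cancel)

lemma word_eval_Cons: "word_eval x y (l#w) = letter_eval x y l * word_eval x y w"
  by (simp add: word_eval_def)
lemma word_eval_Nil: "word_eval x y [] = 1"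
  by (simp add: word_eval_def)
lemma word_eval_append: "word_eval x y (v@w) = word_eval x y v * word_eval x y w"
  by (simp add: word_eval_def)

lemma eval_cancel:
  assumes "x \<noteq> 0" "y \<noteq> 0"
  shows "word_eval x y (cancel l w) = letter_eval x y l * word_eval x y w"
proof (cases w)
  case Nil thus ?thesis by (simp add: word_eval_Cons word_eval_Nil)
next
  case (Cons m v)
  show ?thesis
  proof (cases "fst l = fst m \<and> snd l \<noteq> snd m")
    case True
    then have "letter_eval x y l * letter_eval x y m = 1"
      using assms by (cases l; cases m) (auto simp: letter_eval_def)
    then show ?thesis using True Cons
      by (simp add: word_eval_Cons mult.assoc[symmetric])
  next
    case False
    then have "cancel l w = l#m#v" using Cons by simp
    thus ?thesis using Cons by (simp add: word_eval_Cons)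
  qed
qed

lemma eval_red:
  assumes "x \<noteq> 0" "y \<noteq> 0"
  shows "word_eval x y (red w) = word_eval x y w"
  by (induction w) (simp_all add: eval_cancel[OF assms] word_eval_Cons word_eval_Nil)

lemma free_x: "free_pair x y \<Longrightarrow> x \<noteq> 0"
  unfolding free_pair_def
  apply (erule allE[of _ "{[(False,False)]}"], erule allE[of _ "\<lambda>_. 1"])
  by (simp add: reduced_single word_eval_def letter_eval_def)
lemma free_y: "free_pair x y \<Longrightarrow> y \<noteq> 0"
  unfolding free_pair_def
  apply (erule allE[of _ "{[(True,False)]}"], erule allE[of _ "\<lambda>_. 1"])
  by (simp add: reduced_single word_eval_def letter_eval_def)

lemma free_nonzero:
  assumes free: "free_pair x y" and ne: "ws \<noteq> []"
  shows "sum_list (map (word_eval x y) ws) \<noteq> 0"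
proof -
  have x: "x \<noteq> 0" and y: "y \<noteq> 0" using free free_x free_y by auto
  have "sum_list (map (word_eval x y) ws) = sum_list (map (word_eval x y) (map red ws))"
    by (simp add: eval_red[OF x y] comp_def)
  also have "\<dots> = (\<Sum>v\<in>set (map red ws). of_nat (count_list (map red ws) v) * word_eval x y v)"
    by (rule sum_list_count)
  also have "\<dots> = (\<Sum>v\<in>set (map red ws). of_int (int (count_list (map red ws) v)) * word_eval x y v)"
    by simp
  finally have eq: "sum_list (map (word_eval x y) ws) = \<dots>" .
  obtain w where w: "w \<in> set (map red ws)" using ne by (cases ws) auto
  have "(\<Sum>v\<in>set (map red ws). of_int (int (count_list (map red ws) v)) * word_eval x y v) \<noteq> 0"
    using free unfolding free_pair_def
    apply (elim allE[of _ "set (map red ws)"] allE[of _ "\<lambda>v. int (count_list (map red ws) v)"])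
    using w by (auto simp: reduced_red count_list_0_iff)
  thus ?thesis using eq by simp
qed



definition "Y1 x y = y*y*inverse x*inverse (y::'a::division_ring)"
definition "Y2 x y = inverse x*inverse (y::'a::division_ring)"
definition "Y3 x y = x*inverse (y::'a::division_ring)"
definition "CC x y = x*y*inverse x*inverse (y::'a::division_ring)"
definition "CI x y = y*x*inverse y*inverse (x::'a::division_ring)"
definition "RR x y = y*x*inverse (y::'a::division_ring)"
definition "KK x y = Y1 x y + Y2 x y + Y3 x y"
definition "ZR x y = y*x*inverse y*inverse y*inverse x + y*x*inverse y*x*x*inverse y*inverse (x::'a::division_ring)"

lemmas defsY = Y1_def Y2_def Y3_def CC_def CI_def RR_def KK_def ZR_def

lemma id_C: "x \<noteq> 0 \<Longrightarrow> y \<noteq> 0 \<Longrightarrow> Y3 x y * Y1 x y = CC x y"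
  by (simp add: defsY wsimps)
lemma id_CI: "x \<noteq> 0 \<Longrightarrow> y \<noteq> 0 \<Longrightarrow> CI x y * CC x y = 1"
  by (simp add: defsY wsimps)
lemma id_L1: "x \<noteq> 0 \<Longrightarrow> y \<noteq> 0 \<Longrightarrow> (Y2 x y + Y3 x y) * (Y2 x y * Y1 x y) * RR x y = Y2 x y * Y1 x y * ZR x y"
  by (simp add: defsY wsimps)
lemma id_L2: "x \<noteq> 0 \<Longrightarrow> y \<noteq> 0 \<Longrightarrow> Y1 x y * RR x y + ZR x y = RR x y * KK x y * CI x y"
  by (simp add: defsY wsimps)
lemma id_L3: "x \<noteq> 0 \<Longrightarrow> y \<noteq> 0 \<Longrightarrow> Y2 x y * Y1 x y * RR x y - Y1 x y * ZR x y = - (RR x y * CI x y)"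
  by (simp add: defsY wsimps)
lemma id_R1: "x \<noteq> 0 \<Longrightarrow> y \<noteq> 0 \<Longrightarrow> Y1 x y * RR x y = y"
  by (simp add: defsY wsimps)
lemma id_W: "x \<noteq> 0 \<Longrightarrow> y \<noteq> 0 \<Longrightarrow>
  (Y1 x y * Y1 x y + Y2 x y * Y1 x y) * RR x y * CC x y * RR x y - y * y = 1"
  by (simp add: defsY wsimps)



definition mmul :: "('a::ring_1)\<times>'a\<times>'a\<times>'a \<Rightarrow> 'a\<times>'a\<times>'a\<times>'a \<Rightarrow> 'a\<times>'a\<times>'a\<times>'a" where
  "mmul A B = (case A of (a,b,c,d) \<Rightarrow> case B of (e,f,g,h) \<Rightarrow> (a*e+b*g, a*f+b*h, c*e+d*g, c*f+d*h))"

lemma mmul_assoc: "mmul (mmul A B) D = mmul A (mmul B D)"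
  by (cases A; cases B; cases D) (simp add: mmul_def algebra_simps)
lemma mmul_1: "mmul (1,0,0,1) A = A" "mmul A (1,0,0,1) = A"
  by (cases A; simp add: mmul_def)+

definition "Mm x y = (Y1 x y, 1, Y2 x y * Y1 x y, Y2 x y + Y3 x y)"

fun mp :: "'a::division_ring \<Rightarrow> 'a \<Rightarrow> nat \<Rightarrow> 'a\<times>'a\<times>'a\<times>'a" where
  "mp x y 0 = (1,0,0,1)"
| "mp x y (Suc n) = mmul (mp x y n) (Mm x y)"

lemma mp_left: "mp x y (Suc n) = mmul (Mm x y) (mp x y n)"
proof (induction n)
  case 0 thus ?case by (simp add: mmul_1)
next
  case (Suc n)
  have "mp x y (Suc (Suc n)) = mmul (mmul (Mm x y) (mp x y n)) (Mm x y)" using Suc by simp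
  also have "\<dots> = mmul (Mm x y) (mp x y (Suc n))" by (simp add: mmul_assoc)
  finally show ?case .
qed

definition "ma x y n = fst (mp x y n)"
definition "mb x y n = fst (snd (mp x y n))"
definition "mc x y n = fst (snd (snd (mp x y n)))"

lemma ma0: "ma x y 0 = 1" and mb0: "mb x y 0 = 0" by (simp_all add: ma_def mb_def)

lemma recR: "ma x y (Suc n) = ma x y n * Y1 x y + mb x y n * (Y2 x y * Y1 x y)"
            "mb x y (Suc n) = ma x y n + mb x y n * (Y2 x y + Y3 x y)"
  by (cases "mp x y n"; simp add: ma_def mb_def mmul_def Mm_def)+

lemma recL1: "ma x y (Suc n) = Y1 x y * ma x y n + mc x y n"
  unfolding ma_def mc_def mp_left by (cases "mp x y n"; simp add: mmul_def Mm_def)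
lemma recL2: "mc x y (Suc n) = (Y2 x y * Y1 x y) * ma x y n + (Y2 x y + Y3 x y) * mc x y n"
  unfolding ma_def mc_def mp_left by (cases "mp x y n"; simp add: mmul_def Mm_def)
lemmas recL = recL1 recL2

lemma left_rec:
  assumes "x \<noteq> 0" "y \<noteq> 0"
  shows "ma x y (Suc (Suc n)) = KK x y * ma x y (Suc n) - CC x y * ma x y n"
proof -
  have c: "mc x y n = ma x y (Suc n) - Y1 x y * ma x y n" using recL(1)[of x y n] by simp
  have "ma x y (Suc (Suc n)) = Y1 x y * ma x y (Suc n) + (Y2 x y * Y1 x y) * ma x y n
        + (Y2 x y + Y3 x y) * (ma x y (Suc n) - Y1 x y * ma x y n)"
    using recL[of x y "Suc n"] recL(2)[of x y n] c by simp
  also have "\<dots> = KK x y * ma x y (Suc n) - (Y3 x y * Y1 x y) * ma x y n"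
    by (simp add: KK_def algebra_simps)
  finally show ?thesis using id_C[OF assms] by simp
qed

definition "rr x y n = ma x y n * RR x y"

lemma left_rec_r:
  assumes "x \<noteq> 0" "y \<noteq> 0"
  shows "rr x y (Suc (Suc n)) = KK x y * rr x y (Suc n) - CC x y * rr x y n"
  unfolding rr_def left_rec[OF assms] by (simp add: algebra_simps)

lemma right_rec_r:
  assumes x: "x \<noteq> 0" and y: "y \<noteq> 0"
  shows "rr x y (Suc (Suc n)) = rr x y (Suc n) * KK x y * CI x y - rr x y n * CI x y"
proof -
  let ?a = "ma x y" and ?b = "mb x y"
  have h3: "?b n * (Y2 x y * Y1 x y) = ?a (Suc n) - ?a n * Y1 x y" using recR(1)[of x y n] by simp
  have "rr x y (Suc (Suc n)) = ?a (Suc n) * (Y1 x y * RR x y) + ?a n * (Y2 x y * Y1 x y * RR x y)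
          + ?b n * ((Y2 x y + Y3 x y) * (Y2 x y * Y1 x y) * RR x y)"
    unfolding rr_def recR(1)[of x y "Suc n"] recR(2) by (simp add: algebra_simps)
  also have "?b n * ((Y2 x y + Y3 x y) * (Y2 x y * Y1 x y) * RR x y) = ?b n * (Y2 x y * Y1 x y * ZR x y)"
    by (simp only: id_L1[OF x y])
  also have "\<dots> = (?b n * (Y2 x y * Y1 x y)) * ZR x y"
    by (simp add: mult.assoc)
  also have "\<dots> = (?a (Suc n) - ?a n * Y1 x y) * ZR x y" using h3 by simp
  finally have "rr x y (Suc (Suc n)) = ?a (Suc n) * (Y1 x y * RR x y + ZR x y)
       + ?a n * (Y2 x y * Y1 x y * RR x y - Y1 x y * ZR x y)"
    by (simp add: algebra_simps)
  also have "\<dots> = ?a (Suc n) * (RR x y * KK x y * CI x y) + ?a n * (- (RR x y * CI x y))"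
    by (simp add: id_L2[OF x y] id_L3[OF x y])
  finally show ?thesis by (simp add: rr_def algebra_simps)
qed

lemma W_const:
  assumes x: "x \<noteq> 0" and y: "y \<noteq> 0"
  shows "rr x y (Suc (Suc n)) * CC x y * rr x y n - rr x y (Suc n) * rr x y (Suc n) = 1"
proof (induction n)
  case 0
  have "ma x y (Suc (Suc 0)) = Y1 x y * Y1 x y + Y2 x y * Y1 x y"
    using recR[of x y 0] recR[of x y 1] by (simp add: ma0 mb0)
  moreover have "rr x y 1 = y" using recR[of x y 0] by (simp add: rr_def ma0 mb0 id_R1[OF x y])
  moreover have "rr x y 0 = RR x y" by (simp add: rr_def ma0)
  ultimately show ?case using id_W[OF x y] by (simp add: rr_def mult.assoc ma0)
next
  case (Suc n)
  let ?r = "rr x y"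
  have "?r (Suc (Suc (Suc n))) * CC x y * ?r (Suc n) =
        (?r (Suc (Suc n)) * KK x y * CI x y - ?r (Suc n) * CI x y) * CC x y * ?r (Suc n)"
    by (simp add: right_rec_r[OF x y])
  also have "\<dots> = ?r (Suc (Suc n)) * KK x y * (CI x y * CC x y) * ?r (Suc n) - ?r (Suc n) * (CI x y * CC x y) * ?r (Suc n)"
    by (simp add: algebra_simps)
  also have "\<dots> = ?r (Suc (Suc n)) * (KK x y * ?r (Suc n)) - ?r (Suc n) * ?r (Suc n)"
    by (simp add: id_CI[OF x y] mult.assoc)
  also have "KK x y * ?r (Suc n) = ?r (Suc (Suc n)) + CC x y * ?r n"
    by (simp add: left_rec_r[OF x y])
  finally show ?case using Suc by (simp add: algebra_simps)
qed



definition "w1 = [(True,False),(True,False),(False,True),(True,True)]"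
definition "w2 = [(False,True),(True,True)]"
definition "w3 = [(False,False),(True,True)]"

lemma we1: "word_eval x y w1 = Y1 x y" by (simp add: w1_def word_eval_def letter_eval_def Y1_def mult.assoc)
lemma we2: "word_eval x y w2 = Y2 x y" by (simp add: w2_def word_eval_def letter_eval_def Y2_def mult.assoc)
lemma we3: "word_eval x y w3 = Y3 x y" by (simp add: w3_def word_eval_def letter_eval_def Y3_def mult.assoc)

lemma sum_words_mult:
  "sum_list (map (word_eval x y) ws) * word_eval x y v = sum_list (map (word_eval x y) (map (\<lambda>w. w@v) ws))"
  by (induction ws) (simp_all add: word_eval_append distrib_right)

lemma sl_mult: "sum_list (map (\<lambda>w. f w * c) ws) = sum_list (map f ws) * (c::'a::ring)"
  by (induction ws) (simp_all add: distrib_right)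

lemma ab_words: "\<exists>ws vs. ws \<noteq> [] \<and> ma x y n = sum_list (map (word_eval x y) ws) \<and> mb x y n = sum_list (map (word_eval x y) vs)"
proof (induction n)
  case 0
  show ?case by (rule exI[of _ "[[]]"], rule exI[of _ "[]"]) (simp add: ma0 mb0 word_eval_Nil)
next
  case (Suc n)
  then obtain ws vs where h: "ws \<noteq> []" "ma x y n = sum_list (map (word_eval x y) ws)"
     "mb x y n = sum_list (map (word_eval x y) vs)" by blast
  have "ma x y (Suc n) = sum_list (map (word_eval x y) (map (\<lambda>w. w@w1) ws @ map (\<lambda>w. w@(w2@w1)) vs))"
    unfolding recR h by (simp add: comp_def word_eval_append we1 we2 sl_mult)
  moreover have "mb x y (Suc n) = sum_list (map (word_eval x y) (ws @ map (\<lambda>w. w@w2) vs @ map (\<lambda>w. w@w3) vs))"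
    unfolding recR h by (simp add: comp_def word_eval_append we3 we2 sl_mult distrib_left)
  ultimately show ?case using h(1) by blast
qed

lemma ma_nonzero: "free_pair x y \<Longrightarrow> ma x y n \<noteq> 0"
  using ab_words[of x y n] free_nonzero by metis




definition PP :: "nat \<Rightarrow> nat \<Rightarrow> nat list set" where
  "PP m j = {p. length p = m + 1 \<and> p ! 0 = 0 \<and> p ! m = j \<and> set p \<subseteq> {0..3} \<and>
      (\<forall>i < m. p ! (i + 1) = p ! i + 1 \<or> p ! i = p ! (i + 1) + 1)}"

lemma paths_PP: "paths n = PP (2*n) 0"
  by (simp add: paths_def PP_def)

lemma PP_finite: "finite (PP m j)"
proof -
  have "PP m j \<subseteq> {p. set p \<subseteq> {0..3} \<and> length p = m + 1}" by (auto simp: PP_def)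
  moreover have "finite {p. set p \<subseteq> {0..3::nat} \<and> length p = m + 1}"
    by (rule finite_lists_length_eq) simp
  ultimately show ?thesis by (rule finite_subset)
qed

lemma PP_0: "PP 0 j = (if j = 0 then {[0]} else {})"
proof -
  have "p \<in> PP 0 j \<longleftrightarrow> j = 0 \<and> p = [0]" for p
    by (cases p) (auto simp: PP_def)
  thus ?thesis by auto
qed

lemma PP_big: "j > 3 \<Longrightarrow> PP m j = {}"
proof -
  assume "j > 3"
  { fix p assume "p \<in> PP m j"
    then have "p ! m \<in> set p" "p ! m = j" "set p \<subseteq> {0..3}" by (auto simp: PP_def)
    hence False using \<open>j > 3\<close> by auto }
  thus ?thesis by auto
qed



lemma weight_snoc:
  assumes "p \<noteq> []"
  shows "path_weight x y (p @ [j]) = path_weight x y p * (if j = last p + 1 then 1 else yw x y (last p))"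
proof -
  have L: "[0..<length (p@[j]) - 1] = [0..<length p - 1] @ [length p - 1]"
    using assms by (cases "length p") auto
  have A: "map (\<lambda>i. if (p@[j]) ! (i + 1) = (p@[j]) ! i + 1 then 1 else yw x y ((p@[j]) ! i)) [0..<length p - 1]
        = map (\<lambda>i. if p ! (i + 1) = p ! i + 1 then 1 else yw x y (p ! i)) [0..<length p - 1]"
    by (intro map_cong refl) (auto simp: nth_append)
  have B: "(p@[j]) ! (length p - 1 + 1) = j" "(p@[j]) ! (length p - 1) = last p"
    using assms by (auto simp: nth_append last_conv_nth)
  show ?thesis unfolding path_weight_def L map_append A using B by simp
qed




lemma PP_mem: "p \<in> PP m j \<longleftrightarrow> length p = m + 1 \<and> p ! 0 = 0 \<and> p ! m = j \<and> set p \<subseteq> {0..3} \<and>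
      (\<forall>i < m. p ! (i + 1) = p ! i + 1 \<or> p ! i = p ! (i + 1) + 1)"
  by (simp add: PP_def)

lemma PP_Suc_sub1:
  assumes q: "q \<in> PP (Suc m) j"
  shows "\<exists>p. q = p @ [j] \<and> p \<in> PP m (q ! m) \<and> (q ! m + 1 = j \<or> q ! m = j + 1)"
proof -
  have lq: "length q = Suc (Suc m)" and q0: "q ! 0 = 0" and qm: "q ! Suc m = j"
    and qset: "set q \<subseteq> {0..3}"
    and qs: "\<forall>i < Suc m. q ! (i + 1) = q ! i + 1 \<or> q ! i = q ! (i + 1) + 1"
    using q unfolding PP_mem by auto
  define p where "p = butlast q"
  have lp: "length p = Suc m" using lq by (simp add: p_def)
  have nthp: "i \<le> m \<Longrightarrow> p ! i = q ! i" for i using lp by (simp add: nth_butlast p_def)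
  have qne: "q \<noteq> []" using lq by auto
  have "last q = j" using qm lq qne by (simp add: last_conv_nth)
  hence qe: "q = p @ [j]" using qne append_butlast_last_id unfolding p_def by metis
  have "set p \<subseteq> set q" unfolding p_def by (auto dest: in_set_butlastD)
  hence sp: "set p \<subseteq> {0..3}" using qset by (rule order_trans)
  have st: "\<forall>i < m. p ! (i + 1) = p ! i + 1 \<or> p ! i = p ! (i + 1) + 1"
  proof (intro allI impI)
    fix i assume "i < m"
    then have "p ! (i+1) = q ! (i+1)" "p ! i = q ! i" using nthp by auto
    thus "p ! (i + 1) = p ! i + 1 \<or> p ! i = p ! (i + 1) + 1" using qs \<open>i < m\<close> by simp
  qed
  have "p ! 0 = 0" using nthp q0 by simp
  moreover have "p ! m = q ! m" using nthp by simp
  ultimately have pin: "p \<in> PP m (q ! m)" unfolding PP_mem using lp sp st by simp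
  have "q ! m + 1 = j \<or> q ! m = j + 1" using qs qm by (metis lessI Suc_eq_plus1)
  thus ?thesis using qe pin by blast
qed

lemma PP_Suc_sub2:
  assumes p: "p \<in> PP m j'" and jj: "j' + 1 = j \<or> j' = j + 1" and j3: "j \<le> 3"
  shows "p @ [j] \<in> PP (Suc m) j"
proof -
  have lp: "length p = Suc m" and p0: "p ! 0 = 0" and pm: "p ! m = j'" and ps: "set p \<subseteq> {0..3}"
    and st: "\<forall>i < m. p ! (i + 1) = p ! i + 1 \<or> p ! i = p ! (i + 1) + 1"
    using p unfolding PP_mem by auto
  let ?q = "p @ [j]"
  have nq: "i \<le> m \<Longrightarrow> ?q ! i = p ! i" for i using lp by (simp add: nth_append)
  have nq2: "?q ! Suc m = j" using lp by (simp add: nth_append)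
  have "\<forall>i < Suc m. ?q ! (i + 1) = ?q ! i + 1 \<or> ?q ! i = ?q ! (i + 1) + 1"
  proof (intro allI impI)
    fix i assume i: "i < Suc m"
    show "?q ! (i + 1) = ?q ! i + 1 \<or> ?q ! i = ?q ! (i + 1) + 1"
    proof (cases "i < m")
      case True
      then have "?q ! (i+1) = p ! (i+1)" "?q ! i = p ! i" using nq by auto
      thus ?thesis using st True by simp
    next
      case False
      then have "i = m" using i by simp
      thus ?thesis using nq[of m] nq2 pm jj by auto
    qed
  qed
  moreover have "set ?q \<subseteq> {0..3}" using ps j3 by simp
  moreover have "?q ! 0 = 0" using nq[of 0] p0 by simp
  ultimately show ?thesis unfolding PP_mem using lp nq2 by simp
qed

lemma PP_Suc:
  assumes "j \<le> 3"
  shows "PP (Suc m) j = (\<lambda>p. p@[j]) ` ({p \<in> PP m (j-1). 0 < j} \<union> PP m (Suc j))"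
proof (intro equalityI subsetI)
  fix q assume q: "q \<in> PP (Suc m) j"
  obtain p where "q = p @ [j]" "p \<in> PP m (q ! m)" "q ! m + 1 = j \<or> q ! m = j + 1"
    using PP_Suc_sub1[OF q] by blast
  moreover have "q ! m + 1 = j \<Longrightarrow> q ! m = j - 1 \<and> 0 < j" by simp
  ultimately show "q \<in> (\<lambda>p. p@[j]) ` ({p \<in> PP m (j-1). 0 < j} \<union> PP m (Suc j))"
    by (metis (mono_tags, lifting) Suc_eq_plus1 UnI1 UnI2 image_eqI mem_Collect_eq)
next
  fix q assume "q \<in> (\<lambda>p. p@[j]) ` ({p \<in> PP m (j-1). 0 < j} \<union> PP m (Suc j))"
  then obtain p where q: "q = p @ [j]" and "p \<in> {p \<in> PP m (j-1). 0 < j} \<union> PP m (Suc j)" by blast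
  then consider "p \<in> PP m (j-1)" "0 < j" | "p \<in> PP m (Suc j)" by blast
  thus "q \<in> PP (Suc m) j"
  proof cases
    case 1 thus ?thesis using PP_Suc_sub2[of p m "j-1" j] assms q by simp
  next
    case 2 thus ?thesis using PP_Suc_sub2[of p m "Suc j" j] assms q by simp
  qed
qed


definition "ff x y m j = (\<Sum>p\<in>PP m j. path_weight x y p)"

lemma ff_Suc:
  assumes "j \<le> 3"
  shows "ff x y (Suc m) j = (if 0 < j then ff x y m (j-1) else 0) + ff x y m (Suc j) * yw x y (Suc j)"
proof -
  let ?A = "{p \<in> PP m (j-1). 0 < j}" and ?B = "PP m (Suc j)"
  have fin: "finite ?A" "finite ?B" using PP_finite by auto
  have disj: "?A \<inter> ?B = {}" by (auto simp: PP_def)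
  have inj: "inj_on (\<lambda>p. p@[j]) (?A \<union> ?B)" by (auto simp: inj_on_def)
  have ne: "p \<noteq> [] \<and> last p = j'" if pp: "p \<in> PP m j'" for p j'
  proof -
    have l: "length p = Suc m" and pm: "p!m = j'" using pp by (auto simp: PP_def)
    then have "p \<noteq> []" by auto
    thus ?thesis using l pm by (simp add: last_conv_nth)
  qed
  have "ff x y (Suc m) j = (\<Sum>p\<in>?A \<union> ?B. path_weight x y (p@[j]))"
    unfolding ff_def PP_Suc[OF assms] sum.reindex[OF inj] comp_def ..
  also have "\<dots> = (\<Sum>p\<in>?A. path_weight x y (p@[j])) + (\<Sum>p\<in>?B. path_weight x y (p@[j]))"
    by (rule sum.union_disjoint[OF fin disj])
  also have "(\<Sum>p\<in>?A. path_weight x y (p@[j])) = (\<Sum>p\<in>?A. path_weight x y p)"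
    by (intro sum.cong refl) (auto simp: weight_snoc dest: ne)
  also have "\<dots> = (if 0 < j then ff x y m (j-1) else 0)" by (simp add: ff_def)
  also have "(\<Sum>p\<in>?B. path_weight x y (p@[j])) = (\<Sum>p\<in>?B. path_weight x y p * yw x y (Suc j))"
    by (intro sum.cong refl) (auto simp: weight_snoc dest: ne)
  also have "\<dots> = ff x y m (Suc j) * yw x y (Suc j)" by (simp add: ff_def sum_distrib_right)
  finally show ?thesis .
qed

lemma ff4: "ff x y m 4 = 0" by (simp add: ff_def PP_big)

lemma yw123: "yw x y 1 = Y1 x y" "yw x y 2 = Y2 x y" "yw x y 3 = Y3 x y"
  by (simp_all add: yw_def Y1_def Y2_def Y3_def)

lemma ff_1: "ff x y (Suc m) (Suc 0) = ff x y m 0 + ff x y m (Suc (Suc 0)) * Y2 x y"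
  using ff_Suc[of "Suc 0" x y m] by (simp add: yw_def Y2_def)
lemma ff_3: "ff x y (Suc m) (Suc (Suc (Suc 0))) = ff x y m (Suc (Suc 0))"
proof -
  have "ff x y m (Suc (Suc (Suc (Suc 0)))) = 0" using ff4[of x y m] by (simp add: numeral_eq_Suc)
  thus ?thesis using ff_Suc[of "Suc (Suc (Suc 0))" x y m] by simp
qed
lemma ff_0: "ff x y (Suc m) 0 = ff x y m (Suc 0) * Y1 x y"
  using ff_Suc[of 0 x y m] by (simp add: yw_def Y1_def)
lemma ff_2: "ff x y (Suc m) (Suc (Suc 0)) = ff x y m (Suc 0) + ff x y m (Suc (Suc (Suc 0))) * Y3 x y"
  using ff_Suc[of "Suc (Suc 0)" x y m] by (simp add: yw_def Y3_def)

lemma ff_ma: "ff x y (2*n) 0 = ma x y n \<and> ff x y (2*n) (Suc (Suc 0)) = mb x y n"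
proof (induction n)
  case 0 thus ?case by (simp add: ff_def PP_0 path_weight_def ma0 mb0)
next
  case (Suc n)
  have e: "2 * Suc n = Suc (Suc (2*n))" by simp
  show ?case unfolding e ff_0 ff_2 ff_1 ff_3 using Suc recR[of x y n]
    by (simp add: algebra_simps)
qed




theorem theorem3p5:
  fixes x y :: "'a::division_ring" and R :: "int \<Rightarrow> 'a"
  assumes free: "free_pair x y"
    and rec: "\<And>n. R (n + 1) * (x * y * inverse x * inverse y) * R (n - 1) = R n * R n + 1"
    and R0: "R 0 = y * x * inverse y"
    and R1: "R 1 = y"
  shows "\<forall>n::nat. R (int n) * inverse (R 0) = (\<Sum>p\<in>paths n. path_weight x y p)"
proof
  fix n :: nat
  have x: "x \<noteq> 0" and y: "y \<noteq> 0" using free free_x free_y by auto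
  have Ceq: "x * y * inverse x * inverse y = CC x y" by (simp add: CC_def)
  have Cnz: "CC x y \<noteq> 0" using x y by (simp add: CC_def)
  have RRnz: "RR x y \<noteq> 0" using x y by (simp add: RR_def)
  have rnz: "rr x y k \<noteq> 0" for k using ma_nonzero[OF free] RRnz by (simp add: rr_def)
  have main: "R (int k) = rr x y k \<and> R (int (Suc k)) = rr x y (Suc k)" for k
  proof (induction k)
    case 0
    have "rr x y 1 = y" using recR(1)[of x y 0] by (simp add: rr_def ma0 mb0 id_R1[OF x y])
    thus ?case using R0 R1 by (simp add: rr_def ma0 RR_def)
  next
    case (Suc k)
    have e1: "int (Suc k) + 1 = int (Suc (Suc k))" "int (Suc k) - 1 = int k" by simp_all
    have "R (int (Suc (Suc k))) * CC x y * rr x y k = rr x y (Suc k) * rr x y (Suc k) + 1"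
      using rec[of "int (Suc k)"] Suc unfolding e1 Ceq by simp
    also have "\<dots> = rr x y (Suc (Suc k)) * CC x y * rr x y k"
      using W_const[OF x y, of k] by (simp add: algebra_simps)
    finally have "(R (int (Suc (Suc k))) - rr x y (Suc (Suc k))) * (CC x y * rr x y k) = 0"
      by (simp add: algebra_simps)
    moreover have "CC x y * rr x y k \<noteq> 0" using Cnz rnz by simp
    ultimately have "R (int (Suc (Suc k))) = rr x y (Suc (Suc k))" by simp
    thus ?case using Suc by simp
  qed
  have "R (int n) * inverse (R 0) = ma x y n * RR x y * inverse (RR x y)"
    using main[of n] main[of 0] by (simp add: rr_def ma0)
  also have "\<dots> = ma x y n" using RRnz by (simp add: mult.assoc)
  also have "\<dots> = ff x y (2*n) 0" using ff_ma[of x y n] by simp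
  finally show "R (int n) * inverse (R 0) = (\<Sum>p\<in>paths n. path_weight x y p)"
    by (simp add: ff_def paths_PP)
qed


end
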